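(* Let $G$ be a complete geometric graph and let $B$ be a blocker for $\mathcal{T}_{\leq 3}(G)$. Let $a$ be a leaf of $B$ with leaf edge $[a,b]$, let $l(a,b)^{+}$ be one of the two open sides of the line $l(a,b)$, and suppose $V(G)\cap l(a,b)^{+}\neq\emptyset$. Let $c\in V(G)\cap l(a,b)^{+}$ be the vertex for which the angle $\angle abc$ is maximal among all vertices in $l(a,b)^{+}$. Then $[b,c]\in E(B)$.
   Context: A geometric graph is a graph whose vertices are points in the plane in general position (no three collinear) and whose edges are straight segments between pairs of vertices; $G$ is complete if all pairs of vertices are joined. $l(a,b)$ is the line through $a$ and $b$. $\mathcal{T}_{\leq k}(G)$ denotes the family of all simple (non-crossing) spanning trees of $G$ of (graph) diameter at most $k$. A subgraph $B$ blocks a family $\mathcal{F}$ of subgraphs if it shares at least one edge with every member of $\mathcal{F}$; a blocker of $\mathcal{F}$ is a subgraph that blocks $\mathcal{F}$ and has the smallest possible number of edges among all subgraphs blocking $\mathcal{F}$. A leaf of $B$ is a vertex of degree 1 in $B$, and its leaf edge is the unique edge of $B$ containing it. *)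

theory Defs
  imports "HOL-Analysis.Analysis"
begin

type_synonym point = "real \<times> real"
type_synonym edge = "point set"

definition general_position :: "point set \<Rightarrow> bool" where
  "general_position V \<longleftrightarrow> finite V \<and>
     (\<forall>a\<in>V. \<forall>b\<in>V. \<forall>c\<in>V. a \<noteq> b \<and> a \<noteq> c \<and> b \<noteq> c \<longrightarrow> \<not> collinear {a, b, c})"

definition complete_edges :: "point set \<Rightarrow> edge set" where
  "complete_edges V = {{a, b} | a b. a \<in> V \<and> b \<in> V \<and> a \<noteq> b}"

definition seg :: "edge \<Rightarrow> point set" where
  "seg e = (\<Union>a\<in>e. \<Union>b\<in>e. closed_segment a b)"

definition non_crossing :: "edge set \<Rightarrow> bool" where
  "non_crossing T \<longleftrightarrow> (\<forall>e\<in>T. \<forall>f\<in>T. e \<noteq> f \<longrightarrow> seg e \<inter> seg f \<subseteq> e \<inter> f)"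

definition walk_le :: "edge set \<Rightarrow> nat \<Rightarrow> point \<Rightarrow> point \<Rightarrow> bool" where
  "walk_le T k u v \<longleftrightarrow> (\<exists>ps. ps \<noteq> [] \<and> hd ps = u \<and> last ps = v \<and> length ps \<le> Suc k \<and>
      (\<forall>i. Suc i < length ps \<longrightarrow> {ps ! i, ps ! Suc i} \<in> T))"

definition connected_on :: "point set \<Rightarrow> edge set \<Rightarrow> bool" where
  "connected_on V T \<longleftrightarrow> (\<forall>u\<in>V. \<forall>v\<in>V. \<exists>k. walk_le T k u v)"

definition has_cycle :: "edge set \<Rightarrow> bool" where
  "has_cycle T \<longleftrightarrow> (\<exists>vs. length vs \<ge> 3 \<and> distinct vs \<and>
      (\<forall>i < length vs. {vs ! i, vs ! ((Suc i) mod length vs)} \<in> T))"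

definition spanning_tree :: "point set \<Rightarrow> edge set \<Rightarrow> edge set \<Rightarrow> bool" where
  "spanning_tree V E T \<longleftrightarrow> T \<subseteq> E \<and> connected_on V T \<and> \<not> has_cycle T"

definition diam_le :: "point set \<Rightarrow> edge set \<Rightarrow> nat \<Rightarrow> bool" where
  "diam_le V T k \<longleftrightarrow> (\<forall>u\<in>V. \<forall>v\<in>V. walk_le T k u v)"

definition trees_le :: "point set \<Rightarrow> nat \<Rightarrow> edge set set" where
  "trees_le V k = {T. spanning_tree V (complete_edges V) T \<and> non_crossing T \<and> diam_le V T k}"

definition blocks :: "edge set \<Rightarrow> edge set set \<Rightarrow> bool" where
  "blocks B F \<longleftrightarrow> (\<forall>T\<in>F. B \<inter> T \<noteq> {})"

definition is_blocker :: "edge set \<Rightarrow> edge set set \<Rightarrow> edge set \<Rightarrow> bool" where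
  "is_blocker E F B \<longleftrightarrow> B \<subseteq> E \<and> blocks B F \<and>
     (\<forall>B'. B' \<subseteq> E \<and> blocks B' F \<longrightarrow> card B \<le> card B')"

definition leaf :: "edge set \<Rightarrow> point \<Rightarrow> bool" where
  "leaf B a \<longleftrightarrow> card {e\<in>B. a \<in> e} = 1"

text \<open>Open side of line l(a,b); s = 1 or s = -1 selects one of the two sides.\<close>
definition open_side :: "point \<Rightarrow> point \<Rightarrow> real \<Rightarrow> point set" where
  "open_side a b s = {p. s * ((fst b - fst a) * (snd p - snd a) - (snd b - snd a) * (fst p - fst a)) > 0}"

definition angle3 :: "point \<Rightarrow> point \<Rightarrow> point \<Rightarrow> real" where
  "angle3 a b c = arccos (((a - b) \<bullet> (c - b)) / (norm (a - b) * norm (c - b)))"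

end

theory Submission imports Defs begin

definition cr :: "point \<Rightarrow> point \<Rightarrow> point \<Rightarrow> real" where
  "cr p q r = (fst q - fst p) * (snd r - snd p) - (snd q - snd p) * (fst r - fst p)"

lemma par_aux:
  fixes x1 x2 z1 z2 :: real
  assumes "x1 * z2 = x2 * z1" "(x1, x2) \<noteq> (0, 0)"
  shows "z1 = ((z1*x1 + z2*x2) / (x1^2+x2^2)) * x1 \<and> z2 = ((z1*x1 + z2*x2) / (x1^2+x2^2)) * x2"
proof -
  have d: "x1^2+x2^2 \<noteq> 0" using assms(2) by (auto simp: add_nonneg_eq_0_iff)
  have a: "(z1*x1 + z2*x2) * x1 = z1 * (x1^2+x2^2)"
    using assms(1) by (simp add: power2_eq_square algebra_simps)
  have b: "(z1*x1 + z2*x2) * x2 = z2 * (x1^2+x2^2)"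
    using assms(1) by (simp add: power2_eq_square algebra_simps)
  show ?thesis using a b d by (simp add: field_simps)
qed

lemma cr_zero_collinear:
  assumes "p \<noteq> q" "cr p q r = 0"
  shows "collinear {p, q, r}"
proof -
  obtain p1 p2 where P: "p = (p1,p2)" by (cases p)
  obtain q1 q2 where Q: "q = (q1,q2)" by (cases q)
  obtain r1 r2 where R: "r = (r1,r2)" by (cases r)
  have "(q1-p1, q2-p2) \<noteq> (0,0)" using assms(1) P Q by auto
  moreover have "(q1-p1) * (r2-p2) = (q2-p2) * (r1-p1)" using assms(2) by (simp add: cr_def P Q R)
  ultimately obtain k where k: "r1 - p1 = k * (q1-p1)" "r2 - p2 = k * (q2-p2)"
    using par_aux by blast
  have "\<forall>x\<in>{p,q,r}. \<exists>c. x = p + c *\<^sub>R (q - p)"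
  proof
    fix x assume "x \<in> {p,q,r}"
    then consider "x = p" | "x = q" | "x = r" by auto
    then show "\<exists>c. x = p + c *\<^sub>R (q - p)"
    proof cases
      case 1 then show ?thesis by (intro exI[of _ 0]) simp
    next
      case 2 then show ?thesis by (intro exI[of _ 1]) simp
    next
      case 3 then show ?thesis using k by (intro exI[of _ k]) (simp add: P Q R algebra_simps)
    qed
  qed
  then show ?thesis unfolding collinear_alt by blast
qed

lemma gp_cr:
  assumes "general_position V" "p \<in> V" "q \<in> V" "r \<in> V" "p \<noteq> q" "p \<noteq> r" "q \<noteq> r"
  shows "cr p q r \<noteq> 0"
  using assms cr_zero_collinear unfolding general_position_def by blast

lemma cr_comb: "cr p q ((1 - t) *\<^sub>R u + t *\<^sub>R v) = (1 - t) * cr p q u + t * cr p q v"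
  by (simp add: cr_def algebra_simps)

lemma cr_self1 [simp]: "cr p q p = 0" and cr_self2 [simp]: "cr p q q = 0"
  by (simp_all add: cr_def)

lemma in_seg: "z \<in> closed_segment u v \<Longrightarrow> \<exists>t. 0 \<le> t \<and> t \<le> 1 \<and> z = (1 - t) *\<^sub>R u + t *\<^sub>R v"
  by (auto simp: closed_segment_def)

lemma seg_zero: "z \<in> closed_segment p q \<Longrightarrow> cr p q z = 0"
  using in_seg[of z p q] by (auto simp: cr_comb)

lemma star_seg:
  assumes "cr p q r \<noteq> 0"
  shows "closed_segment p q \<inter> closed_segment p r \<subseteq> {p}"
proof
  fix z assume z: "z \<in> closed_segment p q \<inter> closed_segment p r"
  then have "cr p q z = 0" using seg_zero by blast
  moreover obtain t where t: "0 \<le> t" "t \<le> 1" "z = (1 - t) *\<^sub>R p + t *\<^sub>R r" using z in_seg by blast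
  ultimately have "t * cr p q r = 0" by (simp add: cr_comb)
  then have "t = 0" using assms by simp
  then show "z \<in> {p}" using t by simp
qed

lemma sep_seg:
  assumes "cr p q u * cr p q v > 0"
  shows "closed_segment u v \<inter> closed_segment p q = {}"
proof (rule ccontr)
  assume "closed_segment u v \<inter> closed_segment p q \<noteq> {}"
  then obtain z where z: "z \<in> closed_segment u v" "z \<in> closed_segment p q" by blast
  then have "cr p q z = 0" using seg_zero by blast
  moreover obtain t where t: "0 \<le> t" "t \<le> 1" "z = (1 - t) *\<^sub>R u + t *\<^sub>R v" using z in_seg by blast
  ultimately have e: "(1 - t) * cr p q u + t * cr p q v = 0" by (simp add: cr_comb)
  from assms have "(cr p q u > 0 \<and> cr p q v > 0) \<or> (cr p q u < 0 \<and> cr p q v < 0)"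
    by (simp add: zero_less_mult_iff)
  then show False
  proof
    assume h: "cr p q u > 0 \<and> cr p q v > 0"
    have "(1 - t) * cr p q u \<ge> 0" "t * cr p q v \<ge> 0" using h t by auto
    then have "(1 - t) * cr p q u = 0" "t * cr p q v = 0" using e by linarith+
    then show False using h by auto
  next
    assume h: "cr p q u < 0 \<and> cr p q v < 0"
    have "(1 - t) * cr p q u \<le> 0" "t * cr p q v \<le> 0" using h t by (auto simp: mult_nonneg_nonpos)
    then have "(1 - t) * cr p q u = 0" "t * cr p q v = 0" using e by linarith+
    then show False using h by auto
  qed
qed

lemma opp_seg:
  assumes "s * cr a b x < 0" "s * cr a b c > 0" "a \<noteq> b"
  shows "closed_segment a x \<inter> closed_segment b c = {}"
proof (rule ccontr)
  assume "closed_segment a x \<inter> closed_segment b c \<noteq> {}"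
  then obtain z where z: "z \<in> closed_segment a x" "z \<in> closed_segment b c" by blast
  obtain t where t: "0 \<le> t" "t \<le> 1" "z = (1 - t) *\<^sub>R a + t *\<^sub>R x" using z in_seg by blast
  obtain t' where t': "0 \<le> t'" "t' \<le> 1" "z = (1 - t') *\<^sub>R b + t' *\<^sub>R c" using z in_seg by blast
  have "s * cr a b z = t * (s * cr a b x)" unfolding t(3) cr_comb by simp
  moreover have "s * cr a b z = t' * (s * cr a b c)" unfolding t'(3) cr_comb by simp
  moreover have "t * (s * cr a b x) \<le> 0" using t assms by (simp add: mult_nonneg_nonpos)
  moreover have "t' * (s * cr a b c) \<ge> 0" using t' assms by simp
  ultimately have "t * (s * cr a b x) = 0" "t' * (s * cr a b c) = 0" by linarith+
  then have "t = 0" "t' = 0" using assms by auto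
  then show False using t t' assms by simp
qed

lemma polar:
  fixes u1 u2 p1 p2 \<sigma> :: real
  assumes sg: "\<sigma> = 1 \<or> \<sigma> = -1" and pos: "\<sigma> * (u1*p2 - u2*p1) > 0"
  defines "nu \<equiv> sqrt (u1^2+u2^2)" and "np \<equiv> sqrt (p1^2+p2^2)"
  defines "ca \<equiv> (u1*p1+u2*p2) / (nu * np)"
  shows "nu > 0" "np > 0" "u1*p2 - u2*p1 = \<sigma> * nu * np * sin (arccos ca)"
    "u1*p1+u2*p2 = nu * np * cos (arccos ca)" "0 \<le> arccos ca" "arccos ca \<le> pi"
proof -
  have cr0: "u1*p2 - u2*p1 \<noteq> 0" using pos by auto
  have "u1^2+u2^2 \<noteq> 0"
  proof
    assume "u1^2+u2^2 = 0" then have "u1 = 0" "u2 = 0" by (auto simp: add_nonneg_eq_0_iff)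
    then show False using cr0 by simp
  qed
  then have U: "u1^2+u2^2 > 0" by (simp add: order_le_neq_trans[OF add_nonneg_nonneg[OF zero_le_power2 zero_le_power2]] )
  show nu: "nu > 0" unfolding nu_def using U by simp
  have "p1^2+p2^2 \<noteq> 0"
  proof
    assume "p1^2+p2^2 = 0" then have "p1 = 0" "p2 = 0" by (auto simp: add_nonneg_eq_0_iff)
    then show False using cr0 by simp
  qed
  then have P: "p1^2+p2^2 > 0" by (simp add: order_le_neq_trans[OF add_nonneg_nonneg[OF zero_le_power2 zero_le_power2]] )
  show np: "np > 0" unfolding np_def using P by simp
  have lag: "(u1*p2 - u2*p1)^2 + (u1*p1+u2*p2)^2 = (nu*np)^2"
    unfolding nu_def np_def using U P by (simp add: power_mult_distrib power2_eq_square algebra_simps)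
  have nn: "nu * np > 0" using nu np by simp
  have ca2: "1 - ca^2 = ((u1*p2 - u2*p1) / (nu*np))^2"
  proof -
    have D: "(nu*np)^2 > 0" using nu np by simp
    have "((u1*p2 - u2*p1)/(nu*np))^2 + ((u1*p1+u2*p2)/(nu*np))^2 = ((u1*p2 - u2*p1)^2 + (u1*p1+u2*p2)^2)/(nu*np)^2"
      by (simp only: power_divide add_divide_distrib[symmetric])
    also have "\<dots> = 1" using lag D by simp
    finally show ?thesis unfolding ca_def by linarith
  qed
  have cab: "\<bar>ca\<bar> \<le> 1"
  proof -
    have "ca^2 \<le> 1" using ca2 by (smt (verit) zero_le_power2)
    then show ?thesis by (simp add: abs_square_le_1)
  qed
  show "0 \<le> arccos ca" "arccos ca \<le> pi" using cab arccos_lbound arccos_ubound by auto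
  have "cos (arccos ca) = ca" using cab by (simp add: cos_arccos_abs)
  then show "u1*p1+u2*p2 = nu * np * cos (arccos ca)" unfolding ca_def using nu np by simp
  have "sin (arccos ca) = sqrt (((u1*p2 - u2*p1) / (nu*np))^2)" using cab ca2 by (simp add: sin_arccos_abs)
  also have "\<dots> = \<bar>u1*p2 - u2*p1\<bar> / (nu*np)" using nn by (simp add: real_sqrt_abs)
  also have "\<bar>u1*p2 - u2*p1\<bar> = \<sigma> * (u1*p2 - u2*p1)" using sg pos by auto
  finally have "sin (arccos ca) = \<sigma> * (u1*p2 - u2*p1) / (nu*np)" .
  then have "\<sigma> * nu * np * sin (arccos ca) = \<sigma> * \<sigma> * (u1*p2 - u2*p1)" using nu np by simp
  then show "u1*p2 - u2*p1 = \<sigma> * nu * np * sin (arccos ca)" using sg by auto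
qed

lemma angle_real:
  fixes u1 u2 p1 p2 q1 q2 \<sigma> :: real
  assumes sg: "\<sigma> = 1 \<or> \<sigma> = -1" and pp: "\<sigma> * (u1*p2 - u2*p1) > 0" and pq: "\<sigma> * (u1*q2 - u2*q1) > 0"
    and ang: "arccos ((u1*p1+u2*p2) / (sqrt (u1^2+u2^2) * sqrt (p1^2+p2^2)))
          \<le> arccos ((u1*q1+u2*q2) / (sqrt (u1^2+u2^2) * sqrt (q1^2+q2^2)))"
  shows "(q1*p2 - q2*p1) * (q1*u2 - q2*u1) \<ge> 0"
proof -
  define nu where "nu = sqrt (u1^2+u2^2)"
  define np where "np = sqrt (p1^2+p2^2)"
  define nq where "nq = sqrt (q1^2+q2^2)"
  define \<alpha> where "\<alpha> = arccos ((u1*p1+u2*p2) / (nu * np))"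
  define \<beta> where "\<beta> = arccos ((u1*q1+u2*q2) / (nu * nq))"
  note P = polar[OF sg pp, folded nu_def np_def, folded \<alpha>_def]
  note Q = polar[OF sg pq, folded nu_def nq_def, folded \<beta>_def]
  have ab: "\<alpha> \<le> \<beta>" using ang unfolding \<alpha>_def \<beta>_def nu_def np_def nq_def .
  have nu2: "nu^2 = u1^2+u2^2" unfolding nu_def by simp
  have id: "nu^2 * (p1*q2 - p2*q1) = (u1*q2 - u2*q1)*(u1*p1+u2*p2) - (u1*p2 - u2*p1)*(u1*q1+u2*q2)"
    unfolding nu2 by (simp add: power2_eq_square algebra_simps)
  also have "\<dots> = \<sigma> * nu^2 * np * nq * (sin \<beta> * cos \<alpha> - cos \<beta> * sin \<alpha>)"
    unfolding P(3) P(4) Q(3) Q(4) by (simp add: power2_eq_square algebra_simps)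
  also have "sin \<beta> * cos \<alpha> - cos \<beta> * sin \<alpha> = sin (\<beta> - \<alpha>)" by (simp add: sin_diff)
  finally have cpq: "p1*q2 - p2*q1 = \<sigma> * np * nq * sin (\<beta> - \<alpha>)" using P(1) by simp
  have s1: "sin (\<beta> - \<alpha>) \<ge> 0" using ab P(5) Q(6) by (intro sin_ge_zero) auto
  have s2: "sin \<beta> \<ge> 0" using Q(5) Q(6) by (intro sin_ge_zero) auto
  have "(q1*p2 - q2*p1) * (q1*u2 - q2*u1) = (p1*q2 - p2*q1) * (u1*q2 - u2*q1)" by (simp add: algebra_simps)
  also have "\<dots> = (\<sigma> * \<sigma>) * (np * nq * sin (\<beta> - \<alpha>)) * (nu * nq * sin \<beta>)" unfolding cpq Q(3) by (simp add: algebra_simps)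
  also have "\<dots> = (np * nq * sin (\<beta> - \<alpha>)) * (nu * nq * sin \<beta>)" using sg by auto
  also have "\<dots> \<ge> 0" using P(1,2) Q(2) s1 s2 by simp
  finally show ?thesis .
qed

lemma angle3_eq:
  "angle3 (a1,a2) (b1,b2) (x1,x2) = arccos (((a1-b1)*(x1-b1)+(a2-b2)*(x2-b2)) /
     (sqrt ((a1-b1)^2+(a2-b2)^2) * sqrt ((x1-b1)^2+(x2-b2)^2)))"
  by (simp add: angle3_def norm_Pair)

lemma angle_pt:
  assumes sg: "s = 1 \<or> s = -1" and "s * cr a b x > 0" "s * cr a b c > 0"
    and "angle3 a b x \<le> angle3 a b c"
  shows "cr b c x * cr b c a \<ge> 0"
proof -
  obtain a1 a2 where A: "a = (a1,a2)" by (cases a)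
  obtain b1 b2 where B: "b = (b1,b2)" by (cases b)
  obtain c1 c2 where C: "c = (c1,c2)" by (cases c)
  obtain x1 x2 where X: "x = (x1,x2)" by (cases x)
  have sg': "-s = 1 \<or> -s = -1" using sg by auto
  have 1: "-s * ((a1-b1)*(x2-b2) - (a2-b2)*(x1-b1)) > 0" using assms(2) by (simp add: cr_def A B X algebra_simps)
  have 2: "-s * ((a1-b1)*(c2-b2) - (a2-b2)*(c1-b1)) > 0" using assms(3) by (simp add: cr_def A B C algebra_simps)
  have 3: "arccos (((a1-b1)*(x1-b1)+(a2-b2)*(x2-b2)) / (sqrt ((a1-b1)^2+(a2-b2)^2) * sqrt ((x1-b1)^2+(x2-b2)^2)))
     \<le> arccos (((a1-b1)*(c1-b1)+(a2-b2)*(c2-b2)) / (sqrt ((a1-b1)^2+(a2-b2)^2) * sqrt ((c1-b1)^2+(c2-b2)^2)))"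
    using assms(4) unfolding A B C X angle3_eq .
  have "((c1-b1)*(x2-b2) - (c2-b2)*(x1-b1)) * ((c1-b1)*(a2-b2) - (c2-b2)*(a1-b1)) \<ge> 0"
    by (rule angle_real[OF sg' 1 2 3])
  then show ?thesis by (simp add: cr_def A B C X)
qed

lemma seg_pair: "seg {p, q} = closed_segment p q"
  unfolding seg_def by (auto simp: closed_segment_commute)

lemma walk1: "walk_le T k u u"
  unfolding walk_le_def by (intro exI[of _ "[u]"]) auto

lemma walk2: "{u,v} \<in> T \<Longrightarrow> 1 \<le> k \<Longrightarrow> walk_le T k u v"
  unfolding walk_le_def by (intro exI[of _ "[u,v]"]) auto

lemma walk3: "{u,w} \<in> T \<Longrightarrow> {w,v} \<in> T \<Longrightarrow> 2 \<le> k \<Longrightarrow> walk_le T k u v"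
  unfolding walk_le_def
proof (intro exI[of _ "[u,w,v]"] conjI allI impI)
  fix i assume "{u,w} \<in> T" "{w,v} \<in> T" "Suc i < length [u,w,v]"
  then show "{[u,w,v] ! i, [u,w,v] ! Suc i} \<in> T" by (cases i) (auto simp: less_Suc_eq)
qed auto

lemma walk4: "{u,w} \<in> T \<Longrightarrow> {w,z} \<in> T \<Longrightarrow> {z,v} \<in> T \<Longrightarrow> 3 \<le> k \<Longrightarrow> walk_le T k u v"
  unfolding walk_le_def
proof (intro exI[of _ "[u,w,z,v]"] conjI allI impI)
  fix i assume "{u,w} \<in> T" "{w,z} \<in> T" "{z,v} \<in> T" "Suc i < length [u,w,z,v]"
  then have "i = 0 \<or> i = 1 \<or> i = 2" by auto
  then show "{[u,w,z,v] ! i, [u,w,z,v] ! Suc i} \<in> T" using \<open>{u,w} \<in> T\<close> \<open>{w,z} \<in> T\<close> \<open>{z,v} \<in> T\<close> by auto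
qed auto

lemma no_cycle:
  assumes nbr: "\<And>p q r. {p,q} \<in> T \<Longrightarrow> {q,r} \<in> T \<Longrightarrow> p \<noteq> r \<Longrightarrow> q = a \<or> q = c"
  shows "\<not> has_cycle T"
proof
  assume "has_cycle T"
  then obtain vs where L: "length vs \<ge> 3" and D: "distinct vs"
    and E: "\<And>i. i < length vs \<Longrightarrow> {vs ! i, vs ! ((Suc i) mod length vs)} \<in> T"
    unfolding has_cycle_def by blast
  define n where "n = length vs"
  have n3: "n \<ge> 3" using L n_def by simp
  have ne: "vs \<noteq> []" using L by auto
  have neq: "\<And>i j. i < n \<Longrightarrow> j < n \<Longrightarrow> i \<noteq> j \<Longrightarrow> vs ! i \<noteq> vs ! j"
    using D n_def by (simp add: nth_eq_iff_index_eq)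
  have E0: "{vs!0, vs!1} \<in> T" using E[of 0] n3 n_def ne by simp
  have E1: "{vs!1, vs!2} \<in> T" using E[of 1] n3 n_def ne by (simp add: numeral_eq_Suc)
  have E2: "{vs!2, vs!(3 mod n)} \<in> T" using E[of 2] n3 n_def ne by (simp add: numeral_eq_Suc)
  have En: "{vs!(n-1), vs!0} \<in> T" using E[of "n-1"] n3 n_def ne by simp
  have m3: "3 mod n \<noteq> 1" "3 mod n < n"
  proof -
    show "3 mod n < n" using n3 by simp
    show "3 mod n \<noteq> 1"
    proof (cases "n = 3")
      case True then show ?thesis by simp
    next
      case False then have "n > 3" using n3 by simp
      then show ?thesis by simp
    qed
  qed
  have v1: "vs!1 = a \<or> vs!1 = c" using nbr[OF E0 E1] neq[of 0 2] n3 by simp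
  have v2: "vs!2 = a \<or> vs!2 = c"
    using nbr[OF E1 E2] neq[of 1 "3 mod n"] n3 m3 by simp
  have v0: "vs!0 = a \<or> vs!0 = c"
    using nbr[OF En E0] neq[of "n-1" 1] n3 by simp
  have "vs!0 \<noteq> vs!1" "vs!0 \<noteq> vs!2" "vs!1 \<noteq> vs!2" using neq n3 by auto
  then show False using v0 v1 v2 by auto
qed



lemma ce: "p \<in> V \<Longrightarrow> q \<in> V \<Longrightarrow> p \<noteq> q \<Longrightarrow> {p,q} \<in> complete_edges V"
  unfolding complete_edges_def by blast


theorem mainTheorem9:
  fixes V :: "point set" and B :: "edge set" and a b c :: point and s :: real
  assumes "general_position V"
    and "is_blocker (complete_edges V) (trees_le V 3) B"
    and "leaf B a" and "{a, b} \<in> B"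
    and "s = 1 \<or> s = -1"
    and "V \<inter> open_side a b s \<noteq> {}"
    and "c \<in> V \<inter> open_side a b s"
    and "\<forall>c'\<in>V \<inter> open_side a b s. angle3 a b c' \<le> angle3 a b c"
  shows "{b, c} \<in> B"
proof (rule ccontr)
  assume nbc: "{b, c} \<notin> B"
  note gp = assms(1)
  have BE: "B \<subseteq> complete_edges V" and bl: "blocks B (trees_le V 3)"
    using assms(2) unfolding is_blocker_def by auto
  have "{a,b} \<in> complete_edges V" using BE assms(4) by auto
  then obtain a' b' where ab': "{a,b} = {a',b'}" "a' \<in> V" "b' \<in> V" "a' \<noteq> b'"
    unfolding complete_edges_def by blast
  then have aV: "a \<in> V" and bV: "b \<in> V" and ab: "a \<noteq> b"
    by (auto simp: doubleton_eq_iff)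
  have cV: "c \<in> V" and cs: "s * cr a b c > 0"
    using assms(7) unfolding open_side_def cr_def by auto
  have s0: "s \<noteq> 0" using assms(5) by auto
  have ca: "c \<noteq> a" and cb: "c \<noteq> b" using cs by auto
  have leafset: "{e\<in>B. a \<in> e} = {{a,b}}"
  proof -
    have "card {e\<in>B. a \<in> e} = 1" using assms(3) unfolding leaf_def .
    then obtain e where "{e\<in>B. a \<in> e} = {e}" by (auto simp: card_Suc_eq)
    moreover have "{a,b} \<in> {e\<in>B. a \<in> e}" using assms(4) by simp
    ultimately show ?thesis by auto
  qed
  have aB: "{a,x} \<notin> B" if "x \<noteq> b" for x
  proof
    assume "{a,x} \<in> B"
    then have "{a,x} \<in> {e\<in>B. a \<in> e}" by simp
    then have "{a,x} = {a,b}" using leafset by simp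
    then show False using that ab by (auto simp: doubleton_eq_iff)
  qed
  define T where "T = {{a,x} | x. x \<in> V \<and> x \<noteq> a \<and> x \<noteq> b} \<union> {{b,c}}"
  have Ta1: "{a,x} \<in> T" if "x \<in> V" "x \<noteq> a" "x \<noteq> b" for x
    using that unfolding T_def by blast
  have Ta2: "{x,a} \<in> T" if "x \<in> V" "x \<noteq> a" "x \<noteq> b" for x
    using Ta1[OF that] by (simp add: insert_commute)
  have Tbc1: "{b,c} \<in> T" unfolding T_def by blast
  have Tbc2: "{c,b} \<in> T" using Tbc1 by (simp add: insert_commute)
  have Tcases: "(\<exists>x. e = {a,x} \<and> x \<in> V \<and> x \<noteq> a \<and> x \<noteq> b) \<or> e = {b,c}" if "e \<in> T" for e
    using that unfolding T_def by auto
  have disj: "B \<inter> T = {}"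
  proof -
    have "e \<notin> B" if "e \<in> T" for e
      using Tcases[OF that] aB nbc by auto
    then show ?thesis by auto
  qed
  have sub: "T \<subseteq> complete_edges V"
  proof
    fix e assume "e \<in> T"
    then have "(\<exists>x. e = {a,x} \<and> x \<in> V \<and> x \<noteq> a \<and> x \<noteq> b) \<or> e = {b,c}" by (rule Tcases)
    then show "e \<in> complete_edges V"
    proof (elim disjE exE conjE)
      fix x assume "e = {a,x}" "x \<in> V" "x \<noteq> a" "x \<noteq> b"
      then show ?thesis using aV ce[of a V x] by simp
    next
      assume "e = {b,c}" then show ?thesis using bV cV cb ce[of b V c] by simp
    qed
  qed
  have diam: "diam_le V T 3"
    unfolding diam_le_def
  proof (intro ballI)
    fix u v assume u: "u \<in> V" and v: "v \<in> V"
    show "walk_le T 3 u v"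
    proof (cases "u = v")
      case True then show ?thesis by (simp add: walk1)
    next
      case uv: False
      consider "u = a" "v = b" | "u = b" "v = a" | "u = a" "v \<noteq> a" "v \<noteq> b"
        | "v = a" "u \<noteq> a" "u \<noteq> b" | "u = b" "v \<noteq> a" "v \<noteq> b" | "v = b" "u \<noteq> a" "u \<noteq> b"
        | "u \<noteq> a" "u \<noteq> b" "v \<noteq> a" "v \<noteq> b" using uv by blast
      then show ?thesis
      proof cases
        case 1 then show ?thesis using walk3[OF Ta1[OF cV ca cb] Tbc2] by simp
      next
        case 2 then show ?thesis using walk3[OF Tbc1 Ta2[OF cV ca cb]] by simp
      next
        case 3 then show ?thesis using walk2[OF Ta1[OF v]] by simp
      next
        case 4 then show ?thesis using walk2[OF Ta2[OF u]] by simp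
      next
        case 5 then show ?thesis using walk4[OF Tbc1 Ta2[OF cV ca cb] Ta1[OF v]] by simp
      next
        case 6 then show ?thesis using walk4[OF Ta2[OF u] Ta1[OF cV ca cb] Tbc2] by simp
      next
        case 7 then show ?thesis using walk3[OF Ta2[OF u] Ta1[OF v]] by simp
      qed
    qed
  qed
  have conn: "connected_on V T" using diam unfolding diam_le_def connected_on_def by blast
  have nb1: "p = (if q = b then c else a)" if "{p,q} \<in> T" "q \<noteq> a" "q \<noteq> c" for p q
  proof -
    have "(\<exists>x. {p,q} = {a,x} \<and> x \<in> V \<and> x \<noteq> a \<and> x \<noteq> b) \<or> {p,q} = {b,c}" by (rule Tcases[OF that(1)])
    then show ?thesis
    proof (elim disjE exE conjE)
      fix x assume "{p,q} = {a,x}" "x \<in> V" "x \<noteq> a" "x \<noteq> b"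
      then have "p = a" "q = x" using that(2) by (auto simp: doubleton_eq_iff)
      then show ?thesis using \<open>x \<noteq> b\<close> by simp
    next
      assume "{p,q} = {b,c}"
      then have "p = c" "q = b" using that(3) by (auto simp: doubleton_eq_iff)
      then show ?thesis by simp
    qed
  qed
  have nbr: "q = a \<or> q = c" if "{p,q} \<in> T" "{q,r} \<in> T" "p \<noteq> r" for p q r
  proof (rule ccontr)
    assume q: "\<not> (q = a \<or> q = c)"
    have "{r,q} \<in> T" using that(2) by (simp add: insert_commute)
    then show False using nb1[OF that(1)] nb1[of r q] q that(3) by auto
  qed
  have acyc: "\<not> has_cycle T" by (rule no_cycle[of T a c]) (rule nbr)
  have side: "closed_segment a x \<inter> closed_segment b c \<subseteq> {a,x} \<inter> {b,c}"
    if x: "x \<in> V" "x \<noteq> a" "x \<noteq> b" for x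
  proof (cases "x = c")
    case True
    have "cr c a b \<noteq> 0" using gp_cr[OF gp cV aV bV] ca cb ab by auto
    then have "closed_segment c a \<inter> closed_segment c b \<subseteq> {c}" by (rule star_seg)
    then show ?thesis using True by (auto simp: closed_segment_commute)
  next
    case False
    have cx: "cr a b x \<noteq> 0" using gp_cr[OF gp aV bV x(1)] x ab by auto
    then have "s * cr a b x < 0 \<or> s * cr a b x > 0" using s0 by (metis linorder_neqE_linordered_idom mult_eq_0_iff)
    then show ?thesis
    proof
      assume "s * cr a b x < 0"
      then show ?thesis using opp_seg[OF _ cs ab] by auto
    next
      assume xs: "s * cr a b x > 0"
      then have "x \<in> V \<inter> open_side a b s" using x(1) unfolding open_side_def cr_def by auto
      then have "angle3 a b x \<le> angle3 a b c" using assms(8) by auto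
      then have ge: "cr b c x * cr b c a \<ge> 0" using angle_pt[OF assms(5) xs cs] by simp
      have "cr b c x \<noteq> 0" using gp_cr[OF gp bV cV x(1)] cb x False by auto
      moreover have "cr b c a \<noteq> 0" using gp_cr[OF gp bV cV aV] cb ca ab by auto
      ultimately have "cr b c a * cr b c x > 0" using ge
        by (simp add: mult.commute order_le_neq_trans)
      then show ?thesis using sep_seg[of b c a x] by auto
    qed
  qed
  have nc: "non_crossing T"
    unfolding non_crossing_def
  proof (intro ballI impI)
    fix e f assume e: "e \<in> T" and f: "f \<in> T" and ef: "e \<noteq> f"
    have E: "(\<exists>x. e = {a,x} \<and> x \<in> V \<and> x \<noteq> a \<and> x \<noteq> b) \<or> e = {b,c}" by (rule Tcases[OF e])
    have F: "(\<exists>x. f = {a,x} \<and> x \<in> V \<and> x \<noteq> a \<and> x \<noteq> b) \<or> f = {b,c}" by (rule Tcases[OF f])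
    show "seg e \<inter> seg f \<subseteq> e \<inter> f"
      using E
    proof (elim disjE exE conjE)
      fix x assume ex: "e = {a,x}" "x \<in> V" "x \<noteq> a" "x \<noteq> b"
      show ?thesis using F
      proof (elim disjE exE conjE)
        fix y assume fy: "f = {a,y}" "y \<in> V" "y \<noteq> a" "y \<noteq> b"
        then have "x \<noteq> y" using ef ex by auto
        then have "cr a x y \<noteq> 0" using gp_cr[OF gp aV ex(2) fy(2)] ex fy by auto
        then have "closed_segment a x \<inter> closed_segment a y \<subseteq> {a}" by (rule star_seg)
        then show ?thesis using ex fy by (auto simp: seg_pair)
      next
        assume "f = {b,c}"
        then show ?thesis using side[OF ex(2-4)] ex by (simp add: seg_pair)
      qed
    next
      assume eb: "e = {b,c}"
      show ?thesis using F
      proof (elim disjE exE conjE)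
        fix y assume fy: "f = {a,y}" "y \<in> V" "y \<noteq> a" "y \<noteq> b"
        then show ?thesis using side[OF fy(2-4)] eb by (auto simp: seg_pair)
      next
        assume "f = {b,c}" then show ?thesis using eb ef by simp
      qed
    qed
  qed
  have "T \<in> trees_le V 3"
    unfolding trees_le_def spanning_tree_def using sub conn acyc nc diam by blast
  then show False using bl disj unfolding blocks_def by blast
qed

end
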